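(* Suppose the system is described by a distribution $\mathbf{p}\in[\vec{z}]_i$. A parallel configuration of gates specified by the partition $\mathcal{F},\mathcal{D},\mathcal{S},\mathcal{B}$ of the paths effects a transformation with the following properties. (1) If $i\in\mathcal{D}$, then $D_i$ 'Clicks' with certainty, all other detectors remain silent, and afterwards the system is described by a distribution $\mathbf{p}'\in[\mathbf{e}_i]_i$. (2) If $i\notin\mathcal{D}$, then no detector 'Clicks', and afterwards the system is described by a distribution $\mathbf{p}'$ characterised by the vector $\vec{z}\,'$ equal to the normalisation of $\prod_{j\in\mathcal{D}}(I-P_j)\prod_{k\in\mathcal{S}}S_k\prod_{\{s,t\}\in\mathcal{B}}B_{st}\,\vec{z}$, as follows: (a) if $i\notin\bigcup\mathcal{B}$ (path $i$ does not enter a beam splitter), then $\mathbf{p}'\in[\vec{z}\,']_i$; (b) if $i\in\{s,t\}\in\mathcal{B}$, then $\mathbf{p}'=\frac{|z_s'|^2}{|z_s'|^2+|z_t'|^2}\mathbf{p}_s'+\frac{|z_t'|^2}{|z_s'|^2+|z_t'|^2}\mathbf{p}_t'$ with $\mathbf{p}_s'\in[\vec{z}\,']_s$ and $\mathbf{p}_t'\in[\vec{z}\,']_t$ (whenever $|z_s'|^2+|z_t'|^2\neq0$).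
   Context: A local ontological model for a single particle in an $N$-path interferometric circuit. Ontic states are $(q,\vec{u},\vec{\tau})\in\Lambda$, with particle position $q\in\{1,\dots,N\}$, field amplitudes $\vec{u}\in\mathbb{C}^N$ ($|u_j|\le1$) and field strengths $\vec{\tau}\in\mathbb{R}^N$ ($0\le\tau_j\le1$); $\mathcal{P}(\Lambda)$ is the set of probability distributions on $\Lambda$. Gates (local; the particle changes path only at beam splitters): free evolution: $u_j\to u_j$, $\tau_j\to\tau_j/2$. Phase shifter $S_j$: $u_j\to e^{i\omega}u_j$, $\tau_j\to\tau_j/2$. Detector $D_j$: 'Clicks' iff $q=j$; if $q=j$ then $u_j\to1,\tau_j\to1$; otherwise $u_j$ unchanged, $\tau_j\to0$. Beam splitter $B_{st}$ ($R+T=1$): with $\tau^{(st)}=\max\{\tau_s,\tau_t\}$, $(u_s',u_t')^T=\begin{pmatrix}i\sqrt{R}&\sqrt{T}\\ \sqrt{T}&i\sqrt{R}\end{pmatrix}\mathrm{diag}(\delta_{\tau_s\tau^{(st)}},\delta_{\tau_t\tau^{(st)}})(u_s,u_t)^T$, $\tau_s,\tau_t\to\tau^{(st)}/2$, and if $q\in\{s,t\}$ the particle goes to $s$ with probability $|u_s'|^2/(|u_s'|^2+|u_t'|^2)$, else to $t$. A parallel configuration of gates is a partition of the paths $\{1,\dots,N\}$ into $\mathcal{F}$ (empty paths), $\mathcal{D}$ (detectors), $\mathcal{S}$ (phase shifters) and $\mathcal{B}$ (pairs $\{s,t\}$ crossing on beam splitters). $\Lambda^i_{\vec{z}}$ is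 the set of ontic states with $q=i$, $\tau_i=\tau:=\max_k\tau_k>0$, and $\Delta_\tau\vec{u}=\alpha\vec{z}$ for some nonzero $\alpha\in\mathbb{C}$, where $\Delta_\tau=\mathrm{diag}(\delta_{\tau_1\tau},\dots,\delta_{\tau_N\tau})$; $[\vec{z}]_i$ is the set of distributions with support in $\Lambda^i_{\vec{z}}$. Matrices: $P_j$ is the diagonal projector onto the $j$-th component; $S_k$ is diagonal with $e^{i\omega}$ in entry $k$ and 1 elsewhere; $B_{st}$ is the identity except for the block $\begin{pmatrix}i\sqrt{R}&\sqrt{T}\\ \sqrt{T}&i\sqrt{R}\end{pmatrix}$ on entries $\{s,t\}$. $\mathbf{e}_i$ is the $i$-th standard basis vector.
   Formalization: The set $\Lambda^i_{\vec{z}}$ omits the amplitude bound $|u_j|\le1$ of $\Lambda$, so distributions in $[\vec{z}]_i$, $[\mathbf{e}_i]_i$ and $[\vec{z}\,']_i$ may carry field amplitudes of modulus above 1. The statement above fails without it. *)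

theory Defs
  imports "HOL-Probability.Probability"
begin

text \<open>Paths are indexed by a finite type 'n (N = CARD('n)).
  An ontic state is (q, u, tau): particle position, field amplitudes, field strengths.\<close>

type_synonym 'n ontic = "'n \<times> (complex^'n) \<times> (real^'n)"

definition lam_M :: "('n::finite) ontic measure" where
  "lam_M = count_space UNIV \<Otimes>\<^sub>M (borel \<Otimes>\<^sub>M borel)"

definition tau_max :: "real^'n::finite \<Rightarrow> real" where
  "tau_max tau = Max (range (\<lambda>k. tau $ k))"

definition Delta_mat :: "real \<Rightarrow> real^'n \<Rightarrow> complex^'n^'n" where
  "Delta_mat t tau = (\<chi> a b. if a = b \<and> tau $ a = t then 1 else 0)"

definition Lam :: "'n::finite \<Rightarrow> complex^'n \<Rightarrow> 'n ontic set" where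
  "Lam i z = {(q, u, tau). q = i \<and> (\<forall>j. 0 \<le> tau $ j \<and> tau $ j \<le> 1) \<and>
      tau $ i = tau_max tau \<and> tau_max tau > 0 \<and>
      (\<exists>\<alpha>::complex. \<alpha> \<noteq> 0 \<and> Delta_mat (tau_max tau) tau *v u = \<alpha> *s z)}"

definition zdist :: "complex^'n \<Rightarrow> 'n::finite \<Rightarrow> 'n ontic measure set" where
  "zdist z i = {p. prob_space p \<and> sets p = sets lam_M \<and> (AE x in p. x \<in> Lam i z)}"

definition parallel_config :: "'n set \<Rightarrow> 'n set \<Rightarrow> 'n set \<Rightarrow> 'n set set \<Rightarrow> bool" where
  "parallel_config F D S B \<longleftrightarrow>
     F \<inter> D = {} \<and> F \<inter> S = {} \<and> D \<inter> S = {} \<and> (F \<union> D \<union> S) \<inter> \<Union>B = {} \<and>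
     F \<union> D \<union> S \<union> \<Union>B = UNIV \<and>
     (\<forall>b\<in>B. card b = 2) \<and> (\<forall>b\<in>B. \<forall>c\<in>B. b \<noteq> c \<longrightarrow> b \<inter> c = {})"

definition partner :: "'n set set \<Rightarrow> 'n \<Rightarrow> 'n" where
  "partner B j = (THE k. k \<noteq> j \<and> {j, k} \<in> B)"

definition bs_amp :: "real \<Rightarrow> real^'n \<Rightarrow> complex^'n \<Rightarrow> 'n \<Rightarrow> 'n \<Rightarrow> complex" where
  "bs_amp r tau u j k =
     (let m = max (tau $ j) (tau $ k);
          dj = (if tau $ j = m then 1 else 0);
          dk = (if tau $ k = m then 1 else 0)
      in \<i> * complex_of_real (sqrt r) * dj * u $ j + complex_of_real (sqrt (1 - r)) * dk * u $ k)"

text \<open>Field amplitude / strength update of the parallel configuration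
  (omega j: phase of the shifter on path j; R b: reflectivity of the beam splitter on pair b).\<close>
definition gate_u :: "'n set \<Rightarrow> 'n set \<Rightarrow> 'n set \<Rightarrow> 'n set set \<Rightarrow> ('n \<Rightarrow> real) \<Rightarrow> ('n set \<Rightarrow> real)
    \<Rightarrow> ('n::finite) ontic \<Rightarrow> complex^'n" where
  "gate_u F D S B \<omega> R x = (case x of (q, u, tau) \<Rightarrow>
     (\<chi> j. if j \<in> D then (if q = j then 1 else u $ j)
           else if j \<in> S then exp (\<i> * complex_of_real (\<omega> j)) * u $ j
           else if j \<in> \<Union>B then bs_amp (R {j, partner B j}) tau u j (partner B j)
           else u $ j))"

definition gate_tau :: "'n set \<Rightarrow> 'n set \<Rightarrow> 'n set \<Rightarrow> 'n set set
    \<Rightarrow> ('n::finite) ontic \<Rightarrow> real^'n" where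
  "gate_tau F D S B x = (case x of (q, u, tau) \<Rightarrow>
     (\<chi> j. if j \<in> D then (if q = j then 1 else 0)
           else if j \<in> \<Union>B then max (tau $ j) (tau $ (partner B j)) / 2
           else tau $ j / 2))"

text \<open>Particle motion: only at a beam splitter; from path q (partner k) it goes to q with
  probability |u_q'|^2/(|u_q'|^2+|u_k'|^2), else to k.  (Convention if the denominator
  vanishes: the particle stays.)\<close>
definition move_pmf :: "'n set \<Rightarrow> 'n set \<Rightarrow> 'n set \<Rightarrow> 'n set set \<Rightarrow> ('n \<Rightarrow> real) \<Rightarrow> ('n set \<Rightarrow> real)
    \<Rightarrow> ('n::finite) ontic \<Rightarrow> 'n pmf" where
  "move_pmf F D S B \<omega> R x = (case x of (q, u, tau) \<Rightarrow>
     (if q \<in> \<Union>B then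
        (let k = partner B q; u' = gate_u F D S B \<omega> R x;
             a = (cmod (u' $ q))\<^sup>2; b = (cmod (u' $ k))\<^sup>2
         in if a + b = 0 then return_pmf q
            else map_pmf (\<lambda>c. if c then q else k) (bernoulli_pmf (a / (a + b))))
      else return_pmf q))"

definition gate_kernel :: "'n set \<Rightarrow> 'n set \<Rightarrow> 'n set \<Rightarrow> 'n set set \<Rightarrow> ('n \<Rightarrow> real) \<Rightarrow> ('n set \<Rightarrow> real)
    \<Rightarrow> ('n::finite) ontic \<Rightarrow> 'n ontic measure" where
  "gate_kernel F D S B \<omega> R x =
     distr (measure_pmf (move_pmf F D S B \<omega> R x)) lam_M
       (\<lambda>q'. (q', gate_u F D S B \<omega> R x, gate_tau F D S B x))"

definition apply_config :: "'n set \<Rightarrow> 'n set \<Rightarrow> 'n set \<Rightarrow> 'n set set \<Rightarrow> ('n \<Rightarrow> real) \<Rightarrow> ('n set \<Rightarrow> real)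
    \<Rightarrow> ('n::finite) ontic measure \<Rightarrow> 'n ontic measure" where
  "apply_config F D S B \<omega> R p = Giry_Monad.bind p (gate_kernel F D S B \<omega> R)"

definition clicks :: "'n set \<Rightarrow> 'n ontic \<Rightarrow> 'n set" where
  "clicks D x = {j \<in> D. fst x = j}"

definition P_mat :: "'n \<Rightarrow> complex^'n^'n" where
  "P_mat j = (\<chi> a b. if a = b \<and> a = j then 1 else 0)"

definition S_mat :: "real \<Rightarrow> 'n \<Rightarrow> complex^'n^'n" where
  "S_mat w k = (\<chi> a b. if a = b then (if a = k then exp (\<i> * complex_of_real w) else 1) else 0)"

definition B_mat :: "real \<Rightarrow> 'n set \<Rightarrow> complex^'n^'n" where
  "B_mat r b = (\<chi> a c. if a \<in> b \<and> c \<in> b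
        then (if a = c then \<i> * complex_of_real (sqrt r) else complex_of_real (sqrt (1 - r)))
        else (if a = c then 1 else 0))"

text \<open>Product of a (commuting) family of matrices over a finite index set.\<close>
definition mprod :: "('x \<Rightarrow> complex^'n^'n) \<Rightarrow> 'x set \<Rightarrow> complex^'n^'n" where
  "mprod f X = Finite_Set.fold (\<lambda>x A. f x ** A) (mat 1) X"

definition normalise :: "complex^'n \<Rightarrow> complex^'n" where
  "normalise w = (1 / norm w) *\<^sub>R w"

end

theory Submission
  imports Defs
begin


lemma vec_borel_measurableI:
  fixes f :: "'a \<Rightarrow> 'b::euclidean_space ^ 'n::finite"
  assumes "\<And>j. (\<lambda>x. f x $ j) \<in> borel_measurable M"
  shows "f \<in> borel_measurable M"
proof (rule borel_measurable_euclidean_space[THEN iffD2], intro ballI)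
  fix b :: "'b^'n" assume "b \<in> Basis"
  then obtain j u where b: "b = axis j u" "u \<in> Basis" unfolding Basis_vec_def by auto
  have "(\<lambda>x. inner (f x $ j) u) \<in> borel_measurable M" using assms[of j] by measurable
  then show "(\<lambda>x. f x \<bullet> b) \<in> borel_measurable M" by (simp add: b inner_axis)
qed

lemma vec_nth_borel[measurable]:
  "(\<lambda>x::'b::euclidean_space^'n::finite. x $ j) \<in> borel_measurable borel"
proof (rule borel_measurable_euclidean_space[THEN iffD2], intro ballI)
  fix u :: 'b assume "u \<in> Basis"
  have "(\<lambda>x::'b^'n. inner x (axis j u)) \<in> borel_measurable borel" by measurable
  then show "(\<lambda>x::'b^'n. x $ j \<bullet> u) \<in> borel_measurable borel" by (simp add: inner_axis)
qed

lemma gate_u_meas: "gate_u F D S B \<omega> R \<in> borel_measurable lam_M"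
  unfolding lam_M_def
  apply (rule vec_borel_measurableI)
  unfolding gate_u_def bs_amp_def Let_def
  apply (simp add: case_prod_beta)
  apply measurable
  done




lemma pmf_map_bern:
  assumes "0 \<le> w" "w \<le> 1"
  shows "pmf (map_pmf (\<lambda>c. if c then q else k) (bernoulli_pmf w)) q' =
     (if q' = q then w else 0) + (if q' = k then 1 - w else 0)"
proof -
  have "pmf (map_pmf (\<lambda>c. if c then q else k) (bernoulli_pmf w)) q' =
     measure (measure_pmf (bernoulli_pmf w)) ((\<lambda>c. if c then q else k) -` {q'})"
    by (rule pmf_map)
  also have "\<dots> = (\<Sum>c\<in>(\<lambda>c. if c then q else k) -` {q'}. pmf (bernoulli_pmf w) c)"
    by (rule measure_measure_pmf_finite) simp
  also have "\<dots> = (if q' = q then w else 0) + (if q' = k then 1 - w else 0)"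
  proof -
    have "(\<lambda>c. if c then q else k) -` {q'} = (if q' = q then {True} else {}) \<union> (if q' = k then {False} else {})"
      by (auto split: if_splits)
    then show ?thesis using assms by (auto simp: sum.union_disjoint)
  qed
  finally show ?thesis .
qed

definition wt :: "'n set \<Rightarrow> 'n set \<Rightarrow> 'n set \<Rightarrow> 'n set set \<Rightarrow> ('n \<Rightarrow> real) \<Rightarrow> ('n set \<Rightarrow> real)
    \<Rightarrow> ('n::finite) ontic \<Rightarrow> 'n \<Rightarrow> real" where
  "wt F D S B \<omega> R x q' =
    (let q = fst x; k = partner B q; u' = gate_u F D S B \<omega> R x;
             a = (cmod (u' $ q))\<^sup>2; b = (cmod (u' $ k))\<^sup>2
     in if q \<in> \<Union>B \<and> a + b \<noteq> 0 then (if q' = q then a / (a + b) else 0) + (if q' = k then b / (a + b) else 0)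
        else (if q' = q then 1 else 0))"

lemma pmf_move: "pmf (move_pmf F D S B \<omega> R x) q' = wt F D S B \<omega> R x q'"
proof -
  obtain q u tau where x: "x = (q, u, tau)" by (cases x) auto
  define a where "a = (cmod (gate_u F D S B \<omega> R x $ q))\<^sup>2"
  define b where "b = (cmod (gate_u F D S B \<omega> R x $ partner B q))\<^sup>2"
  have ab: "a \<ge> 0" "b \<ge> 0" by (auto simp: a_def b_def)
  have mv: "move_pmf F D S B \<omega> R x = (if q \<in> \<Union>B then (if a + b = 0 then return_pmf q
            else map_pmf (\<lambda>c. if c then q else partner B q) (bernoulli_pmf (a / (a + b)))) else return_pmf q)"
    unfolding move_pmf_def a_def b_def Let_def by (simp add: x)
  have wtx: "wt F D S B \<omega> R x q' = (if q \<in> \<Union>B \<and> a + b \<noteq> 0 then (if q' = q then a / (a + b) else 0) + (if q' = partner B q then b / (a + b) else 0)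
        else (if q' = q then 1 else 0))"
    unfolding wt_def a_def b_def Let_def by (simp add: x)
  show ?thesis
  proof (cases "q \<in> \<Union>B \<and> a + b \<noteq> 0")
    case True
    then have pos: "a + b > 0" using ab by auto
    have w: "0 \<le> a / (a + b)" "a / (a + b) \<le> 1" using ab pos by auto
    have "1 - a / (a + b) = b / (a + b)" using pos by (simp add: field_simps)
    then show ?thesis using True pmf_map_bern[OF w, of q "partner B q" q'] by (simp add: mv wtx)
  next
    case False
    then show ?thesis by (auto simp: mv wtx indicator_def)
  qed
qed

lemma pred_real_eq0[measurable (raw)]:
  "f \<in> borel_measurable M \<Longrightarrow> Measurable.pred M (\<lambda>x. f x = (0::real))"
  unfolding pred_def by (rule borel_measurable_eq) auto

lemma wt_meas: "(\<lambda>x. wt F D S B \<omega> R x q') \<in> borel_measurable lam_M"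
proof -
  have [measurable]: "gate_u F D S B \<omega> R \<in> borel_measurable (count_space UNIV \<Otimes>\<^sub>M (borel \<Otimes>\<^sub>M borel))" using gate_u_meas unfolding lam_M_def .
  show ?thesis
  unfolding wt_def Let_def
  apply (rule measurable_compose_countable[where f="\<lambda>q x. if q \<in> \<Union>B \<and> (cmod (gate_u F D S B \<omega> R x $ q))\<^sup>2 + (cmod (gate_u F D S B \<omega> R x $ partner B q))\<^sup>2 \<noteq> 0 then (if q' = q then (cmod (gate_u F D S B \<omega> R x $ q))\<^sup>2 / ((cmod (gate_u F D S B \<omega> R x $ q))\<^sup>2 + (cmod (gate_u F D S B \<omega> R x $ partner B q))\<^sup>2) else 0) + (if q' = partner B q then (cmod (gate_u F D S B \<omega> R x $ partner B q))\<^sup>2 / ((cmod (gate_u F D S B \<omega> R x $ q))\<^sup>2 + (cmod (gate_u F D S B \<omega> R x $ partner B q))\<^sup>2) else 0)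
        else (if q' = q then 1 else 0)" and g=fst])
  unfolding lam_M_def by measurable
qed




lemma gate_tau_meas: "gate_tau F D S B \<in> borel_measurable lam_M"
  unfolding lam_M_def
  apply (rule vec_borel_measurableI)
  unfolding gate_tau_def
  apply (simp add: case_prod_beta)
  apply measurable
  done

lemma space_lam_M[simp]: "space lam_M = UNIV"
  by (simp add: lam_M_def space_pair_measure)

lemma post_meas[measurable]:
  "(\<lambda>x. (q', gate_u F D S B \<omega> R x, gate_tau F D S B x)) \<in> measurable lam_M lam_M"
proof -
  have [measurable]: "gate_u F D S B \<omega> R \<in> borel_measurable (count_space UNIV \<Otimes>\<^sub>M (borel \<Otimes>\<^sub>M borel))"
    using gate_u_meas unfolding lam_M_def .
  have [measurable]: "gate_tau F D S B \<in> borel_measurable (count_space UNIV \<Otimes>\<^sub>M (borel \<Otimes>\<^sub>M borel))"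
    using gate_tau_meas unfolding lam_M_def .
  show ?thesis unfolding lam_M_def by measurable
qed

lemma sets_kernel_eq[simp]: "sets (gate_kernel F D S B \<omega> R x) = sets lam_M"
  by (simp add: gate_kernel_def)

lemma prob_kernel: "prob_space (gate_kernel F D S B \<omega> R x)"
  unfolding gate_kernel_def by (rule prob_space.prob_space_distr) (auto simp: prob_space_measure_pmf)

lemma emeasure_kernel:
  "emeasure (gate_kernel F D S B \<omega> R x) A =
    (\<Sum>q'\<in>UNIV. ennreal (wt F D S B \<omega> R x q') * indicator A (q', gate_u F D S B \<omega> R x, gate_tau F D S B x))"
  if "A \<in> sets lam_M"
proof -
  let ?f = "\<lambda>q'. (q', gate_u F D S B \<omega> R x, gate_tau F D S B x)"
  have "emeasure (gate_kernel F D S B \<omega> R x) A = emeasure (measure_pmf (move_pmf F D S B \<omega> R x)) (?f -` A)"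
    unfolding gate_kernel_def using that by (subst emeasure_distr) auto
  also have "\<dots> = (\<Sum>s\<in>?f -` A. ennreal (pmf (move_pmf F D S B \<omega> R x) s))"
    by (subst emeasure_measure_pmf_finite) (auto intro!: sum_ennreal)
  also have "\<dots> = (\<Sum>q'\<in>UNIV. ennreal (wt F D S B \<omega> R x q') * indicator A (?f q'))"
    by (simp add: pmf_move indicator_def sum.If_cases Int_def vimage_def)
  finally show ?thesis .
qed

lemma kernel_meas: fixes F :: "'n::finite set" shows "gate_kernel F D S B \<omega> R \<in> measurable lam_M (subprob_algebra lam_M)"
proof (rule measurable_subprob_algebra)
  fix x show "subprob_space (gate_kernel F D S B \<omega> R x)"
    using prob_kernel prob_space_imp_subprob_space by blast
next
  fix x show "sets (gate_kernel F D S B \<omega> R x) = sets lam_M" by simp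
next
  fix A :: "'n ontic set" assume A[measurable]: "A \<in> sets lam_M"
  have [measurable]: "(\<lambda>x. wt F D S B \<omega> R x q') \<in> borel_measurable lam_M" for q' by (rule wt_meas)
  have "(\<lambda>x. \<Sum>q'\<in>UNIV. ennreal (wt F D S B \<omega> R x q') * indicator A (q', gate_u F D S B \<omega> R x, gate_tau F D S B x)) \<in> borel_measurable lam_M"
    by measurable
  then show "(\<lambda>x. emeasure (gate_kernel F D S B \<omega> R x) A) \<in> borel_measurable lam_M"
    by (subst measurable_cong[OF emeasure_kernel[OF A]]) auto
qed




lemma Delta_comp: "(Delta_mat t tau *v u) $ a = (if tau $ a = t then u $ a else 0)"
  unfolding matrix_vector_mult_def Delta_mat_def
  by (simp add: if_distrib[of "\<lambda>x. x * _"] sum.delta cong: if_cong)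

lemma tau_max_meas[measurable]: "(\<lambda>tau::real^'n::finite. tau_max tau) \<in> borel_measurable borel"
  unfolding tau_max_def by measurable

definition Wset :: "complex^'n \<Rightarrow> (complex^'n) set" where
  "Wset z = {w. \<exists>\<alpha>::complex. \<alpha> \<noteq> 0 \<and> w = \<alpha> *s z}"

lemma Wset_borel: "Wset (z::complex^'n::finite) \<in> sets borel"
proof (cases "z = 0")
  case True
  then have "Wset z = {0}" unfolding Wset_def by (auto intro: exI[of _ 1])
  then show ?thesis by simp
next
  case False
  define V where "V = range (\<lambda>\<alpha>::complex. \<alpha> *s z)"
  have "subspace V" unfolding subspace_def V_def
  proof (intro conjI ballI allI)
    show "0 \<in> range (\<lambda>\<alpha>::complex. \<alpha> *s z)" by (rule image_eqI[of _ _ 0]) (auto simp: vec_eq_iff)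
  next
    fix x y assume "x \<in> range (\<lambda>\<alpha>::complex. \<alpha> *s z)" "y \<in> range (\<lambda>\<alpha>::complex. \<alpha> *s z)"
    then obtain a b where "x = a *s z" "y = b *s z" by auto
    then show "x + y \<in> range (\<lambda>\<alpha>::complex. \<alpha> *s z)"
      by (intro image_eqI[of _ _ "a + b"]) (auto simp: vec_eq_iff algebra_simps)
  next
    fix c :: real and x assume "x \<in> range (\<lambda>\<alpha>::complex. \<alpha> *s z)"
    then obtain a where "x = a *s z" by auto
    then show "c *\<^sub>R x \<in> range (\<lambda>\<alpha>::complex. \<alpha> *s z)"
      by (intro image_eqI[of _ _ "complex_of_real c * a"]) (auto simp: vec_eq_iff scaleR_conv_of_real[where 'a=complex])
  qed
  then have "closed V" by (rule closed_subspace)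
  have "Wset z = V - {0}"
  proof -
    have "a *s z \<noteq> 0" if "a \<noteq> 0" for a
    proof
      assume "a *s z = 0"
      then have "\<forall>j. a * z $ j = 0" by (auto simp: vec_eq_iff)
      with that False show False by (auto simp: vec_eq_iff)
    qed
    moreover have "a *s z = 0" if "a = 0" for a using that by (auto simp: vec_eq_iff)
    ultimately show ?thesis unfolding Wset_def V_def by auto
  qed
  then show ?thesis using \<open>closed V\<close> by auto
qed

lemma Lam_alt: "Lam i z = {(q, u, tau). q = i \<and> (\<forall>j. 0 \<le> tau $ j \<and> tau $ j \<le> 1) \<and>
      tau $ i = tau_max tau \<and> tau_max tau > 0 \<and> Delta_mat (tau_max tau) tau *v u \<in> Wset z}"
  unfolding Lam_def Wset_def by auto

lemma Lam_meas: "Lam i (z::complex^'n::finite) \<in> sets lam_M"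
proof -
  have W[measurable]: "Wset z \<in> sets borel" by (rule Wset_borel)
  have [measurable]: "(\<lambda>(u::complex^'n, tau::real^'n). Delta_mat (tau_max tau) tau *v u) \<in> borel_measurable (borel \<Otimes>\<^sub>M borel)"
    by (rule vec_borel_measurableI) (simp add: Delta_comp case_prod_beta, measurable)
  have "Lam i z = {x \<in> space (count_space UNIV \<Otimes>\<^sub>M (borel \<Otimes>\<^sub>M borel)). fst x = i \<and> (\<forall>j. 0 \<le> snd (snd x) $ j \<and> snd (snd x) $ j \<le> 1) \<and>
      snd (snd x) $ i = tau_max (snd (snd x)) \<and> tau_max (snd (snd x)) > 0 \<and> (\<lambda>(u, tau). Delta_mat (tau_max tau) tau *v u) (snd x) \<in> Wset z}"
    unfolding Lam_alt by (auto simp: space_pair_measure)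
  also have "\<dots> \<in> sets (count_space UNIV \<Otimes>\<^sub>M (borel \<Otimes>\<^sub>M borel))"
    by measurable
  finally show ?thesis unfolding lam_M_def .
qed




lemma partner_props:
  assumes cfg: "parallel_config F D S B" and b: "b \<in> B" and j: "j \<in> b"
  shows "partner B j \<noteq> j" "b = {j, partner B j}"
proof -
  have disj: "\<forall>b\<in>B. \<forall>c\<in>B. b \<noteq> c \<longrightarrow> b \<inter> c = {}" and c2: "\<forall>b\<in>B. card b = 2"
    using cfg unfolding parallel_config_def by simp_all
  from c2 b have "card b = 2" by simp
  then obtain x y where xy: "b = {x, y}" "x \<noteq> y" by (meson card_2_iff)
  then obtain k where k: "b = {j, k}" "k \<noteq> j" using j by (metis insert_commute insertE singletonD)
  have "partner B j = k" unfolding partner_def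
  proof (rule the_equality)
    show "k \<noteq> j \<and> {j, k} \<in> B" using k b by auto
  next
    fix k' assume k': "k' \<noteq> j \<and> {j, k'} \<in> B"
    have "j \<in> {j, k'} \<inter> b" using j by simp
    have "{j, k'} = b"
    proof (rule ccontr)
      assume "{j, k'} \<noteq> b"
      then have "{j, k'} \<inter> b = {}" using disj[rule_format, of "{j, k'}" b] k' b by simp
      then show False using j by auto
    qed
    then show "k' = k" using k k' by (auto simp: doubleton_eq_iff)
  qed
  then show "partner B j \<noteq> j" "b = {j, partner B j}" using k by auto
qed
lemma mat_comm_from_vec:
  fixes A C :: "'a::comm_ring_1^'n::finite^'n"
  assumes "\<And>v. A *v (C *v v) = C *v (A *v v)"
  shows "(\<lambda>X. A ** X) \<circ> (\<lambda>X. C ** X) = (\<lambda>X. C ** X) \<circ> (\<lambda>X. A ** X)"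
proof -
  have "A ** C = C ** A" using assms by (simp add: matrix_eq matrix_vector_mul_assoc)
  then show ?thesis by (auto simp: fun_eq_iff matrix_mul_assoc)
qed

lemma IP_comp: "((mat 1 - P_mat j) *v v) $ a = (if a = j then 0 else (v $ a :: complex))"
proof -
  have "(P_mat j *v v) $ a = (if a = j then v $ a else 0)"
    unfolding matrix_vector_mult_def P_mat_def
    by (simp add: if_distrib[of "\<lambda>x. x * _"] sum.delta cong: if_cong)
  then show ?thesis by (simp add: matrix_vector_mult_diff_rdistrib)
qed

lemma S_comp: "(S_mat w k *v v) $ a = (if a = k then exp (\<i> * complex_of_real w) * v $ a else v $ a)"
  unfolding matrix_vector_mult_def S_mat_def
  by (simp add: if_distrib[of "\<lambda>x. x * _"] sum.delta cong: if_cong)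

lemma B_comp: "(B_mat r b *v v) $ a = (if a \<in> b then (\<Sum>c\<in>b. (if a = c then \<i> * complex_of_real (sqrt r) else complex_of_real (sqrt (1 - r))) * v $ c) else v $ a)"
proof (cases "a \<in> b")
  case True
  have "(B_mat r b *v v) $ a = (\<Sum>c\<in>UNIV. (if c \<in> b then (if a = c then \<i> * complex_of_real (sqrt r) else complex_of_real (sqrt (1 - r))) * v $ c else 0))"
    unfolding matrix_vector_mult_def B_mat_def using True by (auto intro!: sum.cong)
  also have "\<dots> = (\<Sum>c\<in>b. (if a = c then \<i> * complex_of_real (sqrt r) else complex_of_real (sqrt (1 - r))) * v $ c)"
    by (simp add: sum.If_cases)
  finally show ?thesis using True by simp
next
  case False
  then show ?thesis
    unfolding matrix_vector_mult_def B_mat_def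
    by (simp add: if_distrib[of "\<lambda>x. x * _"] sum.delta cong: if_cong)
qed

lemma mprod_insert:
  fixes f :: "'x \<Rightarrow> complex^'n::finite^'n"
  assumes "comp_fun_commute_on X (\<lambda>x (A::complex^'n^'n). f x ** A)" "finite A" "x \<notin> A" "insert x A \<subseteq> X"
  shows "mprod f (insert x A) = f x ** mprod f A"
proof -
  interpret comp_fun_commute_on X "\<lambda>x (A::complex^'n^'n). f x ** A" by (rule assms(1))
  show ?thesis unfolding mprod_def using assms(2-4) by (simp add: fold_insert)
qed

lemma mprod_empty: "mprod f {} = mat 1"
  by (simp add: mprod_def)

lemma mprod_D:
  fixes v :: "complex^'n::finite"
  assumes "finite X"
  shows "(mprod (\<lambda>j. mat 1 - P_mat j) X *v v) $ a = (if a \<in> X then 0 else (v $ a :: complex))"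
proof -
  have cf: "comp_fun_commute_on UNIV (\<lambda>x (A::complex^'n^'n). (\<lambda>j. mat 1 - P_mat j) x ** A)"
    by unfold_locales (rule mat_comm_from_vec, simp add: vec_eq_iff IP_comp)
  from assms show ?thesis
  proof (induction X arbitrary: a rule: finite_induct)
    case empty then show ?case by (simp add: mprod_empty)
  next
    case (insert x A)
    show ?case using insert
      by (simp add: mprod_insert[OF cf] matrix_vector_mul_assoc[symmetric] IP_comp)
  qed
qed

lemma mprod_S:
  fixes v :: "complex^'n::finite"
  assumes "finite X"
  shows "(mprod (\<lambda>k. S_mat (\<omega> k) k) X *v v) $ a = (if a \<in> X then exp (\<i> * complex_of_real (\<omega> a)) * v $ a else v $ a)"
proof -
  have cf: "comp_fun_commute_on UNIV (\<lambda>x (A::complex^'n^'n). (\<lambda>k. S_mat (\<omega> k) k) x ** A)"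
    by unfold_locales (rule mat_comm_from_vec, simp add: vec_eq_iff S_comp)
  from assms show ?thesis
  proof (induction X arbitrary: a rule: finite_induct)
    case empty then show ?case by (simp add: mprod_empty)
  next
    case (insert x A)
    show ?case using insert
      by (simp add: mprod_insert[OF cf] matrix_vector_mul_assoc[symmetric] S_comp)
  qed
qed

lemma mprod_B:
  fixes v :: "complex^'n::finite"
  assumes disj: "\<forall>b\<in>B. \<forall>c\<in>B. b \<noteq> c \<longrightarrow> b \<inter> c = {}" and fin: "finite X" and sub: "X \<subseteq> B"
  shows "(\<forall>b\<in>X. a \<in> b \<longrightarrow> (mprod (\<lambda>b. B_mat (R b) b) X *v v) $ a = (B_mat (R b) b *v v) $ a) \<and>
         (a \<notin> \<Union>X \<longrightarrow> (mprod (\<lambda>b. B_mat (R b) b) X *v v) $ a = v $ a)"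
proof -
  have cf: "comp_fun_commute_on B (\<lambda>x (A::complex^'n^'n). (\<lambda>b. B_mat (R b) b) x ** A)"
  proof (unfold_locales, rule mat_comm_from_vec)
    fix x y v assume xy: "x \<in> B" "y \<in> B"
    show "B_mat (R y) y *v (B_mat (R x) x *v v) = B_mat (R x) x *v (B_mat (R y) y *v v)"
    proof (cases "x = y")
      case False
      then have d: "x \<inter> y = {}" using disj xy by auto
      show ?thesis
      proof (rule vec_eq_iff[THEN iffD2], rule allI)
        fix a
        show "(B_mat (R y) y *v (B_mat (R x) x *v v)) $ a = (B_mat (R x) x *v (B_mat (R y) y *v v)) $ a"
        proof -
          have Bx: "(B_mat (R x) x *v w) $ c = w $ c" if "c \<notin> x" for c w using that by (simp add: B_comp)
          have By: "(B_mat (R y) y *v w) $ c = w $ c" if "c \<notin> y" for c w using that by (simp add: B_comp)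
          consider "a \<in> x" "a \<notin> y" | "a \<in> y" "a \<notin> x" | "a \<notin> x" "a \<notin> y" using d by blast
          then show ?thesis
          proof cases
            case 1
            have "(B_mat (R x) x *v (B_mat (R y) y *v v)) $ a =
               (\<Sum>c\<in>x. (if a = c then \<i> * complex_of_real (sqrt (R x)) else complex_of_real (sqrt (1 - R x))) * (B_mat (R y) y *v v) $ c)"
              using 1 by (simp only: B_comp[of "R x" x _ a] if_True)
            also have "\<dots> = (\<Sum>c\<in>x. (if a = c then \<i> * complex_of_real (sqrt (R x)) else complex_of_real (sqrt (1 - R x))) * v $ c)"
              using d by (intro sum.cong refl) (metis By disjoint_iff)
            also have "\<dots> = (B_mat (R x) x *v v) $ a" using 1 by (simp only: B_comp[of "R x" x _ a] if_True)
            finally have calc: "(B_mat (R x) x *v (B_mat (R y) y *v v)) $ a = (B_mat (R x) x *v v) $ a" .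
            have L: "(B_mat (R y) y *v (B_mat (R x) x *v v)) $ a = (B_mat (R x) x *v v) $ a"
              by (rule By) (use 1 in simp)
            show ?thesis by (simp only: L calc)
          next
            case 2
            have "(B_mat (R y) y *v (B_mat (R x) x *v v)) $ a =
               (\<Sum>c\<in>y. (if a = c then \<i> * complex_of_real (sqrt (R y)) else complex_of_real (sqrt (1 - R y))) * (B_mat (R x) x *v v) $ c)"
              using 2 by (simp only: B_comp[of "R y" y _ a] if_True)
            also have "\<dots> = (\<Sum>c\<in>y. (if a = c then \<i> * complex_of_real (sqrt (R y)) else complex_of_real (sqrt (1 - R y))) * v $ c)"
              using d by (intro sum.cong refl) (metis Bx disjoint_iff)
            also have "\<dots> = (B_mat (R y) y *v v) $ a" using 2 by (simp only: B_comp[of "R y" y _ a] if_True)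
            finally have calc: "(B_mat (R y) y *v (B_mat (R x) x *v v)) $ a = (B_mat (R y) y *v v) $ a" .
            have L: "(B_mat (R x) x *v (B_mat (R y) y *v v)) $ a = (B_mat (R y) y *v v) $ a"
              by (rule Bx) (use 2 in simp)
            show ?thesis by (simp only: L calc)
          next
            case 3
            have L1: "(B_mat (R y) y *v (B_mat (R x) x *v v)) $ a = v $ a"
              using Bx[of a v] By[of a "B_mat (R x) x *v v"] 3 by simp
            have L2: "(B_mat (R x) x *v (B_mat (R y) y *v v)) $ a = v $ a"
              using By[of a v] Bx[of a "B_mat (R y) y *v v"] 3 by simp
            show ?thesis by (simp only: L1 L2)
          qed
        qed
      qed
    qed simp
  qed
  from fin sub show ?thesis
  proof (induction X arbitrary: a rule: finite_induct)
    case empty then show ?case by (simp add: mprod_empty)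
  next
    case (insert x A)
    have dA: "\<forall>b\<in>A. x \<inter> b = {}"
    proof
      fix b assume "b \<in> A"
      then have "b \<noteq> x" "b \<in> B" "x \<in> B" using insert by auto
      then show "x \<inter> b = {}" using disj[rule_format, of x b] by auto
    qed
    let ?w = "mprod (\<lambda>b. B_mat (R b) b) A *v v"
    have eq: "mprod (\<lambda>b. B_mat (R b) b) (insert x A) *v v = B_mat (R x) x *v ?w"
      using insert by (simp add: mprod_insert[OF cf] matrix_vector_mul_assoc[symmetric])
    have wx: "?w $ c = v $ c" if "c \<in> x" for c
      using insert.IH[of c] insert.prems dA that by auto
    have A1: "(B_mat (R x) x *v ?w) $ a = (B_mat (R x) x *v v) $ a" if "a \<in> x"
      using that wx by (simp add: B_comp)
    have A2: "(B_mat (R x) x *v ?w) $ a = ?w $ a" if "a \<notin> x"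
      using that by (simp add: B_comp)
    show ?case
    proof (intro conjI ballI impI)
      fix b assume "b \<in> insert x A" "a \<in> b"
      then show "(mprod (\<lambda>b. B_mat (R b) b) (insert x A) *v v) $ a = (B_mat (R b) b *v v) $ a"
      proof (cases "b = x")
        case True then show ?thesis using A1 \<open>a \<in> b\<close> eq by simp
      next
        case False
        then have "b \<in> A" using \<open>b \<in> insert x A\<close> by auto
        then have "a \<notin> x" using dA \<open>a \<in> b\<close> by auto
        then show ?thesis using A2 eq insert.IH[of a] insert.prems \<open>b \<in> A\<close> \<open>a \<in> b\<close> by auto
      qed
    next
      assume "a \<notin> \<Union>(insert x A)"
      then show "(mprod (\<lambda>b. B_mat (R b) b) (insert x A) *v v) $ a = v $ a"
        using A2 eq insert.IH[of a] insert.prems by auto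
    qed
  qed
qed




lemma cfg_facts:
  assumes "parallel_config F D S B"
  shows "F \<inter> D = {}" "F \<inter> S = {}" "D \<inter> S = {}" "(F \<union> D \<union> S) \<inter> \<Union>B = {}"
    "\<forall>b\<in>B. \<forall>c\<in>B. b \<noteq> c \<longrightarrow> b \<inter> c = {}"
  using assms unfolding parallel_config_def by simp_all

lemma Mz_comp:
  fixes z :: "complex^'n::finite"
  assumes cfg: "parallel_config F D S B"
  shows "((mprod (\<lambda>j. mat 1 - P_mat j) D ** mprod (\<lambda>k. S_mat (\<omega> k) k) S ** mprod (\<lambda>b. B_mat (R b) b) B) *v z) $ a =
    (if a \<in> D then 0 else if a \<in> S then exp (\<i> * complex_of_real (\<omega> a)) * z $ a
     else if a \<in> \<Union>B then \<i> * complex_of_real (sqrt (R {a, partner B a})) * z $ a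
         + complex_of_real (sqrt (1 - R {a, partner B a})) * z $ partner B a
     else z $ a)"
proof -
  note cf = cfg_facts[OF cfg]
  let ?MD = "mprod (\<lambda>j. mat 1 - P_mat j) D" and ?MS = "mprod (\<lambda>k. S_mat (\<omega> k) k) S"
    and ?MB = "mprod (\<lambda>b. B_mat (R b) b) B"
  have e: "(?MD ** ?MS ** ?MB) *v z = ?MD *v (?MS *v (?MB *v z))"
    by (simp add: matrix_vector_mul_assoc matrix_mul_assoc)
  have MB: "(?MB *v z) $ a = (if a \<in> \<Union>B then \<i> * complex_of_real (sqrt (R {a, partner B a})) * z $ a
         + complex_of_real (sqrt (1 - R {a, partner B a})) * z $ partner B a else z $ a)"
  proof (cases "a \<in> \<Union>B")
    case True
    then obtain b where b: "b \<in> B" "a \<in> b" by auto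
    note pp = partner_props[OF cfg b]
    have "(?MB *v z) $ a = (B_mat (R b) b *v z) $ a"
      using mprod_B[OF cf(5) finite, of B a R z] b by auto
    also have "\<dots> = \<i> * complex_of_real (sqrt (R {a, partner B a})) * z $ a
         + complex_of_real (sqrt (1 - R {a, partner B a})) * z $ partner B a"
      using pp b by (simp add: B_comp)
    finally show ?thesis using True by simp
  next
    case False
    then show ?thesis using mprod_B[OF cf(5) finite, of B a R z] by auto
  qed
  show ?thesis unfolding e using cf(3,4) MB
    by (auto simp: mprod_D mprod_S)
qed




lemma tau_max_ge: "t $ j \<le> tau_max (t::real^'n::finite)"
  unfolding tau_max_def by (rule Max_ge) auto

lemma tau_max_eqI: "(\<And>j. t $ j \<le> c) \<Longrightarrow> t $ j0 = c \<Longrightarrow> tau_max (t::real^'n::finite) = c"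
  unfolding tau_max_def by (rule Max_eqI) auto

lemma gate_tau_comp: "gate_tau F D S B (q, u, tau) $ j =
  (if j \<in> D then (if q = j then 1 else 0)
   else if j \<in> \<Union>B then max (tau $ j) (tau $ (partner B j)) / 2 else tau $ j / 2)"
  unfolding gate_tau_def by simp

lemma gate_u_comp: "gate_u F D S B \<omega> R (q, u, tau) $ j =
     (if j \<in> D then (if q = j then 1 else u $ j)
           else if j \<in> S then exp (\<i> * complex_of_real (\<omega> j)) * u $ j
           else if j \<in> \<Union>B then bs_amp (R {j, partner B j}) tau u j (partner B j)
           else u $ j)"
  unfolding gate_u_def by simp

lemma Lam_E:
  assumes "(q, u, tau) \<in> Lam i z"
  obtains \<alpha> where "\<alpha> \<noteq> 0" "\<And>j. (if tau $ j = tau_max tau then u $ j else 0) = \<alpha> * z $ j"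
    "q = i" "\<And>j. 0 \<le> tau $ j" "\<And>j. tau $ j \<le> 1" "tau $ i = tau_max tau" "tau_max tau > 0"
proof -
  from assms obtain \<alpha> where a: "\<alpha> \<noteq> 0" "Delta_mat (tau_max tau) tau *v u = \<alpha> *s z"
    and r: "q = i" "\<forall>j. 0 \<le> tau $ j \<and> tau $ j \<le> 1" "tau $ i = tau_max tau" "tau_max tau > 0"
    unfolding Lam_def by auto
  have "(if tau $ j = tau_max tau then u $ j else 0) = \<alpha> * z $ j" for j
    using arg_cong[OF a(2), of "\<lambda>v. v $ j"] by (simp add: Delta_comp)
  then show ?thesis using that a r by blast
qed

definition Mvec :: "'n set \<Rightarrow> 'n set \<Rightarrow> 'n set \<Rightarrow> 'n set set \<Rightarrow> ('n \<Rightarrow> real) \<Rightarrow> ('n set \<Rightarrow> real)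
    \<Rightarrow> complex^'n \<Rightarrow> complex^'n::finite" where
  "Mvec F D S B \<omega> R z = (mprod (\<lambda>j. mat 1 - P_mat j) D ** mprod (\<lambda>k. S_mat (\<omega> k) k) S ** mprod (\<lambda>b. B_mat (R b) b) B) *v z"

lemma post_props:
  fixes z :: "complex^'n::finite"
  assumes cfg: "parallel_config F D S B" and x: "(i, u, tau) \<in> Lam i z" and iD: "i \<notin> D"
  obtains \<alpha> where "\<alpha> \<noteq> 0" "0 < tau_max tau" "tau_max tau \<le> 1"
    "\<And>j. 0 \<le> gate_tau F D S B (i, u, tau) $ j" "\<And>j. gate_tau F D S B (i, u, tau) $ j \<le> tau_max tau / 2"
    "\<And>j. gate_tau F D S B (i, u, tau) $ j = tau_max tau / 2 \<Longrightarrow> gate_u F D S B \<omega> R (i, u, tau) $ j = \<alpha> * Mvec F D S B \<omega> R z $ j"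
    "\<And>j. gate_tau F D S B (i, u, tau) $ j \<noteq> tau_max tau / 2 \<Longrightarrow> Mvec F D S B \<omega> R z $ j = 0"
    "gate_tau F D S B (i, u, tau) $ i = tau_max tau / 2"
    "i \<in> \<Union>B \<Longrightarrow> gate_tau F D S B (i, u, tau) $ partner B i = tau_max tau / 2"
proof -
  note cf = cfg_facts[OF cfg]
  define m where "m = tau_max tau"
  obtain \<alpha> where a: "\<alpha> \<noteq> 0" "\<And>j. (if tau $ j = m then u $ j else 0) = \<alpha> * z $ j"
    and t: "\<And>j. 0 \<le> tau $ j" "\<And>j. tau $ j \<le> 1" "tau $ i = m" "m > 0"
    using Lam_E[OF x] unfolding m_def by metis
  have le: "tau $ j \<le> m" for j unfolding m_def by (rule tau_max_ge)
  have m1: "m \<le> 1" using t(2)[of i] t(3) by simp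
  have z0: "z $ j = 0" if "tau $ j \<noteq> m" for j using a(2)[of j] a(1) that by simp
  have uz: "u $ j = \<alpha> * z $ j" if "tau $ j = m" for j using a(2)[of j] that by simp
  let ?t = "gate_tau F D S B (i, u, tau)" and ?u = "gate_u F D S B \<omega> R (i, u, tau)"
    and ?w = "Mvec F D S B \<omega> R z"
  have main: "0 \<le> ?t $ j \<and> ?t $ j \<le> m / 2 \<and> (?t $ j = m / 2 \<longrightarrow> ?u $ j = \<alpha> * ?w $ j)
      \<and> (?t $ j \<noteq> m / 2 \<longrightarrow> ?w $ j = 0)" for j
  proof -
    have w: "?w $ j = (if j \<in> D then 0 else if j \<in> S then exp (\<i> * complex_of_real (\<omega> j)) * z $ j
     else if j \<in> \<Union>B then \<i> * complex_of_real (sqrt (R {j, partner B j})) * z $ j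
         + complex_of_real (sqrt (1 - R {j, partner B j})) * z $ partner B j
     else z $ j)" unfolding Mvec_def by (rule Mz_comp[OF cfg])
    consider (D) "j \<in> D" | (S) "j \<in> S" | (B) "j \<in> \<Union>B" | (F) "j \<notin> D" "j \<notin> S" "j \<notin> \<Union>B" by blast
    then show ?thesis
    proof cases
      case D
      then have "i \<noteq> j" using iD by auto
      then show ?thesis using D t(4) by (simp add: gate_tau_comp w)
    next
      case S
      then have "j \<notin> D" "j \<notin> \<Union>B" using cf by auto
      then show ?thesis using S t(1)[of j] le[of j] z0[of j] uz[of j]
        by (auto simp: gate_tau_comp gate_u_comp w)
    next
      case B
      then obtain b where b: "b \<in> B" "j \<in> b" by auto
      note pp = partner_props[OF cfg b]
      define k where "k = partner B j"
      have kB: "k \<in> \<Union>B" using pp b unfolding k_def by auto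
      have jD: "j \<notin> D" "j \<notin> S" using B cf by auto
      have tj: "?t $ j = max (tau $ j) (tau $ k) / 2" using jD B by (simp add: gate_tau_comp k_def)
      have uj: "?u $ j = bs_amp (R {j, k}) tau u j k" using jD B by (simp add: gate_u_comp k_def)
      have wj: "?w $ j = \<i> * complex_of_real (sqrt (R {j, k})) * z $ j
         + complex_of_real (sqrt (1 - R {j, k})) * z $ k" using jD B by (simp add: w k_def)
      show ?thesis
      proof (cases "max (tau $ j) (tau $ k) = m")
        case True
        have dj: "(if tau $ j = max (tau $ j) (tau $ k) then 1 else 0) * u $ j = \<alpha> * z $ j"
          using a(2)[of j] True z0[of j] by (cases "tau $ j = m") auto
        have dk: "(if tau $ k = max (tau $ j) (tau $ k) then 1 else 0) * u $ k = \<alpha> * z $ k"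
          using a(2)[of k] True z0[of k] by (cases "tau $ k = m") auto
        have "?u $ j = \<i> * complex_of_real (sqrt (R {j, k})) * ((if tau $ j = max (tau $ j) (tau $ k) then 1 else 0) * u $ j)
            + complex_of_real (sqrt (1 - R {j, k})) * ((if tau $ k = max (tau $ j) (tau $ k) then 1 else 0) * u $ k)"
          unfolding uj bs_amp_def Let_def by (simp only: mult.assoc)
        also have "\<dots> = \<i> * complex_of_real (sqrt (R {j, k})) * (\<alpha> * z $ j) + complex_of_real (sqrt (1 - R {j, k})) * (\<alpha> * z $ k)"
          by (simp only: dj dk)
        also have "\<dots> = \<alpha> * ?w $ j" unfolding wj by (simp add: algebra_simps)
        finally have "?u $ j = \<alpha> * ?w $ j" .
        then show ?thesis using tj True t(1)[of j] t(1)[of k] by auto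
      next
        case False
        have "tau $ j < m" "tau $ k < m" using False le[of j] le[of k] by auto
        then have "z $ j = 0" "z $ k = 0" using z0 by auto
        then show ?thesis using tj wj False le[of j] le[of k] t(1)[of j] t(1)[of k] by auto
      qed
    next
      case F
      then show ?thesis using t(1)[of j] le[of j] z0[of j] uz[of j]
        by (auto simp: gate_tau_comp gate_u_comp w)
    qed
  qed
  have ti: "?t $ i = m / 2"
  proof (cases "i \<in> \<Union>B")
    case True
    then obtain b where b: "b \<in> B" "i \<in> b" by auto
    have "max (tau $ i) (tau $ partner B i) = m" using t(3) le[of "partner B i"] by auto
    then show ?thesis using True iD by (simp add: gate_tau_comp)
  next
    case False then show ?thesis using iD t(3) by (simp add: gate_tau_comp)
  qed
  have tk: "?t $ partner B i = m / 2" if "i \<in> \<Union>B"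
  proof -
    from that obtain b where b: "b \<in> B" "i \<in> b" by auto
    note pp = partner_props[OF cfg b]
    define k where "k = partner B i"
    have kb: "k \<in> b" "k \<noteq> i" using pp unfolding k_def by auto
    have kbB: "k \<in> \<Union>B" using kb b by auto
    have "b = {k, partner B k}" using partner_props(2)[OF cfg b(1) kb(1)] .
    then have pk: "partner B k = i" using pp(2) kb b(2) unfolding k_def by (auto simp: doubleton_eq_iff)
    have kD: "k \<notin> D" using kbB cf by auto
    have "?t $ k = max (tau $ k) (tau $ i) / 2" using kD kbB pk by (simp add: gate_tau_comp)
    also have "\<dots> = m / 2" using t(3) le[of k] by auto
    finally show ?thesis unfolding k_def .
  qed
  show ?thesis
    apply (rule that[of \<alpha>])
    using a(1) t(4) m1 main ti tk unfolding m_def by auto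
qed


lemma post_in_Lam:
  fixes z :: "complex^'n::finite"
  assumes cfg: "parallel_config F D S B" and x: "(i, u, tau) \<in> Lam i z" and iD: "i \<notin> D"
    and q': "gate_tau F D S B (i, u, tau) $ q' = tau_max tau / 2"
  shows "(q', gate_u F D S B \<omega> R (i, u, tau), gate_tau F D S B (i, u, tau)) \<in> Lam q' (normalise (Mvec F D S B \<omega> R z))"
proof -
  let ?t = "gate_tau F D S B (i, u, tau)" and ?u = "gate_u F D S B \<omega> R (i, u, tau)"
    and ?w = "Mvec F D S B \<omega> R z"
  obtain \<alpha> where P: "\<alpha> \<noteq> 0" "0 < tau_max tau" "tau_max tau \<le> 1"
    "\<And>j. 0 \<le> ?t $ j" "\<And>j. ?t $ j \<le> tau_max tau / 2"
    "\<And>j. ?t $ j = tau_max tau / 2 \<Longrightarrow> ?u $ j = \<alpha> * ?w $ j"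
    "\<And>j. ?t $ j \<noteq> tau_max tau / 2 \<Longrightarrow> ?w $ j = 0"
    using post_props[OF cfg x iD, of \<omega> R] by metis
  have tm: "tau_max ?t = tau_max tau / 2" by (rule tau_max_eqI[OF P(5) q'])
  have Del: "Delta_mat (tau_max ?t) ?t *v ?u = \<alpha> *s ?w"
    unfolding tm by (simp add: vec_eq_iff Delta_comp P(6) P(7))
  have ex: "\<exists>\<alpha>'::complex. \<alpha>' \<noteq> 0 \<and> \<alpha> *s ?w = \<alpha>' *s normalise ?w"
  proof (cases "?w = 0")
    case True
    then show ?thesis by (intro exI[of _ 1]) (simp add: normalise_def vec_eq_iff)
  next
    case False
    then have n: "norm ?w \<noteq> 0" by simp
    show ?thesis
      using n P(1) by (intro exI[of _ "\<alpha> * complex_of_real (norm ?w)"])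
        (simp add: normalise_def vec_eq_iff scaleR_conv_of_real[where 'a=complex])
  qed
  show ?thesis unfolding Lam_def using P(2,3,4,5) q' tm Del ex
    by (auto intro: order_trans[OF P(5)])
qed

lemma post_in_Lam_D:
  fixes z :: "complex^'n::finite"
  assumes cfg: "parallel_config F D S B" and x: "(i, u, tau) \<in> Lam i z" and iD: "i \<in> D"
  shows "(i, gate_u F D S B \<omega> R (i, u, tau), gate_tau F D S B (i, u, tau)) \<in> Lam i (axis i 1)"
proof -
  note cf = cfg_facts[OF cfg]
  let ?t = "gate_tau F D S B (i, u, tau)" and ?u = "gate_u F D S B \<omega> R (i, u, tau)"
  obtain \<alpha> where t: "\<And>j. 0 \<le> tau $ j" "\<And>j. tau $ j \<le> 1"
    using Lam_E[OF x] by metis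
  have iB: "i \<notin> \<Union>B" using iD cf by auto
  have tj: "0 \<le> ?t $ j \<and> (j \<noteq> i \<longrightarrow> ?t $ j \<le> 1/2)" for j
    using t[of j] t[of "partner B j"] by (auto simp: gate_tau_comp)
  have ti: "?t $ i = 1" using iD by (simp add: gate_tau_comp)
  have tle: "?t $ j \<le> 1" for j using tj[of j] ti by (cases "j = i") auto
  have tm: "tau_max ?t = 1" by (rule tau_max_eqI[OF tle ti])
  have Del: "Delta_mat (tau_max ?t) ?t *v ?u = 1 *s axis i 1"
  proof -
    have "(if ?t $ j = 1 then ?u $ j else 0) = axis i 1 $ j" for j
    proof (cases "j = i")
      case True then show ?thesis using ti iD by (simp add: gate_u_comp axis_def)
    next
      case False then have "?t $ j \<noteq> 1" using tj[of j] by auto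
      then show ?thesis using False by (simp add: axis_def)
    qed
    then show ?thesis unfolding tm by (simp add: vec_eq_iff Delta_comp)
  qed
  show ?thesis unfolding Lam_def using tj ti tle tm Del
    by (auto intro!: exI[of _ 1])
qed




lemma wt_Lam:
  fixes z :: "complex^'n::finite"
  assumes cfg: "parallel_config F D S B" and x: "(i, u, tau) \<in> Lam i z" and iD: "i \<notin> D"
    and st: "{s, t} \<in> B" "i \<in> {s, t}"
    and nz: "(cmod (normalise (Mvec F D S B \<omega> R z) $ s))\<^sup>2 + (cmod (normalise (Mvec F D S B \<omega> R z) $ t))\<^sup>2 \<noteq> 0"
  shows "wt F D S B \<omega> R (i, u, tau) q' =
     (if q' = s then (cmod (normalise (Mvec F D S B \<omega> R z) $ s))\<^sup>2 /
        ((cmod (normalise (Mvec F D S B \<omega> R z) $ s))\<^sup>2 + (cmod (normalise (Mvec F D S B \<omega> R z) $ t))\<^sup>2) else 0)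
   + (if q' = t then (cmod (normalise (Mvec F D S B \<omega> R z) $ t))\<^sup>2 /
        ((cmod (normalise (Mvec F D S B \<omega> R z) $ s))\<^sup>2 + (cmod (normalise (Mvec F D S B \<omega> R z) $ t))\<^sup>2) else 0)"
proof -
  let ?t = "gate_tau F D S B (i, u, tau)" and ?u = "gate_u F D S B \<omega> R (i, u, tau)"
    and ?w = "Mvec F D S B \<omega> R z"
  define N where "N = norm ?w"
  define k where "k = partner B i"
  have iB: "i \<in> \<Union>B" using st by auto
  obtain \<alpha> where P: "\<alpha> \<noteq> 0"
    "\<And>j. ?t $ j = tau_max tau / 2 \<Longrightarrow> ?u $ j = \<alpha> * ?w $ j"
    "?t $ i = tau_max tau / 2" "?t $ k = tau_max tau / 2"
    using post_props[OF cfg x iD, of \<omega> R] iB unfolding k_def by metis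
  note pp = partner_props[OF cfg st(1) st(2)]
  have ki: "k \<noteq> i" using pp(1) unfolding k_def .
  have stik: "{s, t} = {i, k}" using pp unfolding k_def by simp
  have sne: "s \<noteq> t" using pp(1) stik unfolding k_def by (auto simp: doubleton_eq_iff)
  have zc: "cmod (normalise ?w $ j) = cmod (?w $ j) / N" for j
    unfolding normalise_def N_def by (simp add: norm_divide)
  have Npos: "N \<noteq> 0" using nz unfolding N_def normalise_def by auto
  have ui: "cmod (?u $ i) = cmod \<alpha> * cmod (?w $ i)" using P(2)[OF P(3)] by (simp add: norm_mult)
  have uk: "cmod (?u $ k) = cmod \<alpha> * cmod (?w $ k)" using P(2)[OF P(4)] by (simp add: norm_mult)
  define X where "X = (cmod (?w $ i))\<^sup>2" 
  define Y where "Y = (cmod (?w $ k))\<^sup>2"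
  have XY: "X + Y \<noteq> 0"
  proof
    assume "X + Y = 0"
    then have "X = 0" "Y = 0" unfolding X_def Y_def by (smt (verit) zero_le_power2)+
    then have "cmod (normalise ?w $ i) = 0" "cmod (normalise ?w $ k) = 0" unfolding zc X_def Y_def by auto
    then show False using nz stik by (auto simp: doubleton_eq_iff)
  qed
  have a0: "(cmod \<alpha>)\<^sup>2 \<noteq> 0" using P(1) by simp
  have ab: "(cmod (?u $ i))\<^sup>2 + (cmod (?u $ k))\<^sup>2 \<noteq> 0"
    using XY a0 unfolding ui uk X_def Y_def by (simp add: power_mult_distrib distrib_left[symmetric])
  have wa: "(cmod (?u $ i))\<^sup>2 / ((cmod (?u $ i))\<^sup>2 + (cmod (?u $ k))\<^sup>2) = X / (X + Y)"
    using a0 XY unfolding ui uk X_def Y_def by (simp add: power_mult_distrib distrib_left[symmetric])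
  have wb: "(cmod (?u $ k))\<^sup>2 / ((cmod (?u $ i))\<^sup>2 + (cmod (?u $ k))\<^sup>2) = Y / (X + Y)"
    using a0 XY unfolding ui uk X_def Y_def by (simp add: power_mult_distrib distrib_left[symmetric])
  have ci: "(cmod (normalise ?w $ i))\<^sup>2 = X / N\<^sup>2" and ck: "(cmod (normalise ?w $ k))\<^sup>2 = Y / N\<^sup>2"
    unfolding zc X_def Y_def by (simp_all add: power_divide)
  have ri: "(cmod (normalise ?w $ i))\<^sup>2 / ((cmod (normalise ?w $ i))\<^sup>2 + (cmod (normalise ?w $ k))\<^sup>2) = X / (X + Y)"
    unfolding ci ck using Npos by (simp add: add_divide_distrib[symmetric])
  have rk: "(cmod (normalise ?w $ k))\<^sup>2 / ((cmod (normalise ?w $ i))\<^sup>2 + (cmod (normalise ?w $ k))\<^sup>2) = Y / (X + Y)"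
    unfolding ci ck using Npos by (simp add: add_divide_distrib[symmetric])
  have wtx: "wt F D S B \<omega> R (i, u, tau) q' = (if q' = i then X / (X + Y) else 0) + (if q' = k then Y / (X + Y) else 0)"
  proof -
    show ?thesis unfolding wt_def Let_def using iB ab wa wb ki by (simp add: k_def[symmetric])
  qed
  show ?thesis
  proof (cases "s = i")
    case True
    then have "t = k" using stik sne by (auto simp: doubleton_eq_iff)
    then show ?thesis using True wtx ri rk ki by simp
  next
    case False
    then have "s = k" "t = i" using stik st(2) by (auto simp: doubleton_eq_iff)
    then show ?thesis using wtx ri rk ki by (simp add: add.commute)
  qed
qed




lemma set_pmf_move:
  "set_pmf (move_pmf F D S B \<omega> R (q, u, tau)) \<subseteq> {q, partner B q}"
  "q \<notin> \<Union>B \<Longrightarrow> set_pmf (move_pmf F D S B \<omega> R (q, u, tau)) = {q}"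
  unfolding move_pmf_def Let_def by auto

lemma pred_Lam[measurable]: "Measurable.pred lam_M (\<lambda>y. y \<in> Lam j v)"
  unfolding pred_def using Lam_meas[of j v] by simp

lemma AE_kernel:
  assumes P: "Measurable.pred lam_M P"
    and h: "\<And>q'. q' \<in> set_pmf (move_pmf F D S B \<omega> R x) \<Longrightarrow> P (q', gate_u F D S B \<omega> R x, gate_tau F D S B x)"
  shows "AE y in gate_kernel F D S B \<omega> R x. P y"
proof -
  have m: "(\<lambda>q'. (q', gate_u F D S B \<omega> R x, gate_tau F D S B x)) \<in> measurable (measure_pmf (move_pmf F D S B \<omega> R x)) lam_M"
    by simp
  have s: "{y \<in> space lam_M. P y} \<in> sets lam_M" using P unfolding pred_def .
  show ?thesis unfolding gate_kernel_def
    by (subst AE_distr_iff[OF m s]) (simp add: AE_measure_pmf_iff h)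
qed

lemma kernel_meas_p:
  assumes "sets p = sets lam_M"
  shows "gate_kernel F D S B \<omega> R \<in> measurable p (subprob_algebra lam_M)"
  using kernel_meas measurable_cong_sets[OF assms refl] by blast

lemma apply_zdist:
  fixes F :: "'n::finite set"
  assumes p: "p \<in> zdist z i"
    and h: "\<And>x. x \<in> Lam i z \<Longrightarrow> AE y in gate_kernel F D S B \<omega> R x. y \<in> Lam j v"
  shows "apply_config F D S B \<omega> R p \<in> zdist v j"
proof -
  have ps: "prob_space p" and sp: "sets p = sets lam_M" and ae: "AE x in p. x \<in> Lam i z"
    using p unfolding zdist_def by auto
  interpret prob_space p by (rule ps)
  have Kp: "gate_kernel F D S B \<omega> R \<in> measurable p (subprob_algebra lam_M)" by (rule kernel_meas_p[OF sp])
  have ne: "space p \<noteq> {}" by (rule not_empty)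
  have "prob_space (apply_config F D S B \<omega> R p)"
    unfolding apply_config_def by (rule prob_space_bind[OF _ Kp]) (simp add: prob_kernel)
  moreover have "sets (apply_config F D S B \<omega> R p) = sets lam_M"
    unfolding apply_config_def by (rule sets_bind[OF _ ne]) simp
  moreover have "AE y in apply_config F D S B \<omega> R p. y \<in> Lam j v"
    unfolding apply_config_def
    by (subst AE_bind[OF Kp]) (use ae h in \<open>auto elim!: eventually_mono\<close>)
  ultimately show ?thesis unfolding zdist_def by auto
qed




lemma wt_nonneg: "0 \<le> wt F D S B \<omega> R x q'"
  using pmf_nonneg[of "move_pmf F D S B \<omega> R x" q'] by (simp add: pmf_move)

lemma measure_kernel:
  assumes "A \<in> sets lam_M"
  shows "measure (gate_kernel F D S B \<omega> R x) A =
    (\<Sum>q'\<in>UNIV. wt F D S B \<omega> R x q' * indicator A (q', gate_u F D S B \<omega> R x, gate_tau F D S B x))"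
proof -
  have "emeasure (gate_kernel F D S B \<omega> R x) A =
    (\<Sum>q'\<in>UNIV. ennreal (wt F D S B \<omega> R x q' * indicator A (q', gate_u F D S B \<omega> R x, gate_tau F D S B x)))"
    unfolding emeasure_kernel[OF assms]
    by (intro sum.cong refl) (simp add: ennreal_mult wt_nonneg ennreal_indicator)
  also have "\<dots> = ennreal (\<Sum>q'\<in>UNIV. wt F D S B \<omega> R x q' * indicator A (q', gate_u F D S B \<omega> R x, gate_tau F D S B x))"
    by (rule sum_ennreal) (simp add: wt_nonneg)
  finally show ?thesis unfolding measure_def
    by (simp add: wt_nonneg sum_nonneg)
qed

lemma mixture:
  fixes z :: "complex^'n::finite"
  assumes cfg: "parallel_config F D S B" and p: "p \<in> zdist z i" and iD: "i \<notin> D"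
    and st: "{s, t} \<in> B" "i \<in> {s, t}"
    and nz: "(cmod (normalise (Mvec F D S B \<omega> R z) $ s))\<^sup>2 + (cmod (normalise (Mvec F D S B \<omega> R z) $ t))\<^sup>2 \<noteq> 0"
  shows "\<exists>ps pt. ps \<in> zdist (normalise (Mvec F D S B \<omega> R z)) s \<and> pt \<in> zdist (normalise (Mvec F D S B \<omega> R z)) t \<and>
                      (\<forall>A\<in>sets lam_M. measure (apply_config F D S B \<omega> R p) A =
                          (cmod (normalise (Mvec F D S B \<omega> R z) $ s))\<^sup>2 / ((cmod (normalise (Mvec F D S B \<omega> R z) $ s))\<^sup>2 + (cmod (normalise (Mvec F D S B \<omega> R z) $ t))\<^sup>2) * measure ps A
                        + (cmod (normalise (Mvec F D S B \<omega> R z) $ t))\<^sup>2 / ((cmod (normalise (Mvec F D S B \<omega> R z) $ s))\<^sup>2 + (cmod (normalise (Mvec F D S B \<omega> R z) $ t))\<^sup>2) * measure pt A)"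
proof -
  define z' where "z' = normalise (Mvec F D S B \<omega> R z)"
  define cs where "cs = (cmod (z' $ s))\<^sup>2 / ((cmod (z' $ s))\<^sup>2 + (cmod (z' $ t))\<^sup>2)"
  define ct where "ct = (cmod (z' $ t))\<^sup>2 / ((cmod (z' $ s))\<^sup>2 + (cmod (z' $ t))\<^sup>2)"
  define f where "f = (\<lambda>(q'::'n) x. (q', gate_u F D S B \<omega> R x, gate_tau F D S B x))"
  have ps: "prob_space p" and sp: "sets p = sets lam_M" and ae: "AE x in p. x \<in> Lam i z"
    using p unfolding zdist_def by auto
  interpret prob_space p by (rule ps)
  have spU: "space p = UNIV" using sets_eq_imp_space_eq[OF sp] by simp
  have fm: "f q' \<in> measurable p lam_M" for q'
    unfolding f_def using post_meas measurable_cong_sets[OF sp refl] by blast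
  have Kp: "gate_kernel F D S B \<omega> R \<in> measurable p (subprob_algebra lam_M)" by (rule kernel_meas_p[OF sp])
  have iB: "i \<in> \<Union>B" using st by auto
  have tq: "gate_tau F D S B x $ q' = tau_max (snd (snd x)) / 2" if "x \<in> Lam i z" "q' \<in> {s, t}" for x q'
  proof -
    obtain q u tau where x: "x = (q, u, tau)" by (cases x) auto
    with that have q: "q = i" unfolding Lam_def by auto
    with that x have xl: "(i, u, tau) \<in> Lam i z" by simp
    note pp = partner_props[OF cfg st(1) st(2)]
    have qq: "q' = i \<or> q' = partner B i" using that(2) pp(2) by auto
    obtain \<alpha> where t1: "gate_tau F D S B (i, u, tau) $ i = tau_max tau / 2"
      and t2: "i \<in> \<Union>B \<Longrightarrow> gate_tau F D S B (i, u, tau) $ partner B i = tau_max tau / 2"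
      using post_props[OF cfg xl iD, of \<omega> R] by blast
    show ?thesis using qq t1 t2[OF iB] unfolding x q by auto
  qed
  have inL: "f q' x \<in> Lam q' z'" if "x \<in> Lam i z" "q' \<in> {s, t}" for x q'
  proof -
    obtain q u tau where x: "x = (q, u, tau)" by (cases x) auto
    with that have q: "q = i" unfolding Lam_def by auto
    with that x have xl: "(i, u, tau) \<in> Lam i z" by simp
    show ?thesis using post_in_Lam[OF cfg xl iD, of q' \<omega> R] tq[OF that] x q unfolding f_def z'_def by simp
  qed
  define ps' where "ps' q' = distr p lam_M (f q')" for q'
  have zd: "ps' q' \<in> zdist z' q'" if "q' \<in> {s, t}" for q'
  proof -
    have "prob_space (ps' q')" unfolding ps'_def by (rule prob_space_distr[OF fm])
    moreover have "sets (ps' q') = sets lam_M" unfolding ps'_def by simp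
    moreover have "AE y in ps' q'. y \<in> Lam q' z'"
      unfolding ps'_def
      by (subst AE_distr_iff[OF fm]) (use Lam_meas[of q' z'] ae inL[OF _ that] in \<open>auto elim!: eventually_mono\<close>)
    ultimately show ?thesis unfolding zdist_def by auto
  qed
  have meas: "measure (apply_config F D S B \<omega> R p) A = cs * measure (ps' s) A + ct * measure (ps' t) A"
    if A: "A \<in> sets lam_M" for A
  proof -
    have ind: "(\<lambda>x. indicator A (f q' x) :: real) \<in> borel_measurable p" for q'
      by (rule measurable_compose[OF fm]) (rule borel_measurable_indicator[OF A])
    have int: "integrable p (\<lambda>x. indicator A (f q' x) :: real)" for q'
      by (rule integrable_const_bound[where B=1]) (auto simp: ind)
    have ip: "(\<integral>x. indicator A (f q' x) \<partial>p) = measure (ps' q') A" for q'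
    proof -
      have bi: "(indicator A :: _ \<Rightarrow> real) \<in> borel_measurable lam_M" by (rule borel_measurable_indicator[OF A])
      show ?thesis using integral_distr[OF fm[of q'] bi] by (simp add: ps'_def)
    qed
    have sm: "(\<lambda>x. \<Sum>q'\<in>UNIV. wt F D S B \<omega> R x q' * indicator A (f q' x)) \<in> borel_measurable p"
    proof -
      have [measurable]: "(\<lambda>x. wt F D S B \<omega> R x q') \<in> borel_measurable p" for q'
        using wt_meas measurable_cong_sets[OF sp refl] by blast
      have [measurable]: "(\<lambda>x. indicator A (f q' x) :: real) \<in> borel_measurable p" for q' by (rule ind)
      show ?thesis by measurable
    qed
    have "measure (apply_config F D S B \<omega> R p) A = (\<integral>x. measure (gate_kernel F D S B \<omega> R x) A \<partial>p)"
      unfolding apply_config_def by (rule measure_bind[OF Kp A])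
    also have "\<dots> = (\<integral>x. (\<Sum>q'\<in>UNIV. wt F D S B \<omega> R x q' * indicator A (f q' x)) \<partial>p)"
      by (rule Bochner_Integration.integral_cong[OF refl]) (simp add: measure_kernel[OF A] f_def)
    also have "\<dots> = (\<integral>x. cs * indicator A (f s x) + ct * indicator A (f t x) \<partial>p)"
    proof (rule integral_cong_AE[OF sm])
      show "(\<lambda>x. cs * indicator A (f s x) + ct * indicator A (f t x)) \<in> borel_measurable p"
        using ind by measurable
      show "AE x in p. (\<Sum>q'\<in>UNIV. wt F D S B \<omega> R x q' * indicator A (f q' x)) = cs * indicator A (f s x) + ct * indicator A (f t x)"
        using ae
      proof (rule eventually_mono)
        fix x assume xL: "x \<in> Lam i z"
        obtain q u tau where x: "x = (q, u, tau)" by (cases x) auto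
        with xL have q: "q = i" unfolding Lam_def by auto
        with xL x have xl: "(i, u, tau) \<in> Lam i z" by simp
        have sne: "s \<noteq> t" using partner_props[OF cfg st(1) st(2)] by (auto simp: doubleton_eq_iff)
        have w: "wt F D S B \<omega> R x q' = (if q' = s then cs else 0) + (if q' = t then ct else 0)" for q'
          using wt_Lam[OF cfg xl iD st nz, of q'] x q unfolding cs_def ct_def z'_def by simp
        show "(\<Sum>q'\<in>UNIV. wt F D S B \<omega> R x q' * indicator A (f q' x)) = cs * indicator A (f s x) + ct * indicator A (f t x)"
          unfolding w by (simp add: distrib_right sum.distrib if_distrib[of "\<lambda>c. c * _"] sum.delta cong: if_cong)
      qed
    qed
    also have "\<dots> = cs * measure (ps' s) A + ct * measure (ps' t) A"
      using int by (simp add: ip)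
    finally show ?thesis .
  qed
  show ?thesis
    using zd meas unfolding z'_def[symmetric] cs_def ct_def by blast
qed




theorem lemma1:
  fixes F D S :: "'n::finite set" and B :: "'n set set"
    and \<omega> :: "'n \<Rightarrow> real" and R :: "'n set \<Rightarrow> real"
    and z :: "complex^'n" and i :: 'n and p :: "'n ontic measure"
  assumes cfg: "parallel_config F D S B"
    and R: "\<forall>b\<in>B. 0 \<le> R b \<and> R b \<le> 1"
    and p: "p \<in> zdist z i"
  shows "(i \<in> D \<longrightarrow>
            (AE x in p. clicks D x = {i}) \<and>
            apply_config F D S B \<omega> R p \<in> zdist (axis i 1) i)
       \<and> (i \<notin> D \<longrightarrow>
            (AE x in p. clicks D x = {}) \<and>
            (let z' = normalise (mprod (\<lambda>j. mat 1 - P_mat j) D ** mprod (\<lambda>k. S_mat (\<omega> k) k) S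
                                  ** mprod (\<lambda>b. B_mat (R b) b) B *v z);
                 p' = apply_config F D S B \<omega> R p
             in (i \<notin> \<Union>B \<longrightarrow> p' \<in> zdist z' i) \<and>
                (\<forall>s t. {s, t} \<in> B \<longrightarrow> i \<in> {s, t} \<longrightarrow>
                   (cmod (z' $ s))\<^sup>2 + (cmod (z' $ t))\<^sup>2 \<noteq> 0 \<longrightarrow>
                   (\<exists>ps pt. ps \<in> zdist z' s \<and> pt \<in> zdist z' t \<and>
                      (\<forall>A\<in>sets lam_M. measure p' A =
                          (cmod (z' $ s))\<^sup>2 / ((cmod (z' $ s))\<^sup>2 + (cmod (z' $ t))\<^sup>2) * measure ps A
                        + (cmod (z' $ t))\<^sup>2 / ((cmod (z' $ s))\<^sup>2 + (cmod (z' $ t))\<^sup>2) * measure pt A)))))"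
proof -
  note cf = cfg_facts[OF cfg]
  have Mv: "mprod (\<lambda>j. mat 1 - P_mat j) D ** mprod (\<lambda>k. S_mat (\<omega> k) k) S
                                  ** mprod (\<lambda>b. B_mat (R b) b) B *v z = Mvec F D S B \<omega> R z"
    unfolding Mvec_def by (rule refl)
  have ae: "AE x in p. x \<in> Lam i z" using p unfolding zdist_def by auto
  have fstL: "fst x = i" if "x \<in> Lam i z" for x using that unfolding Lam_def by auto
  have split: "\<exists>u tau. x = (i, u, tau) \<and> (i, u, tau) \<in> Lam i z" if "x \<in> Lam i z" for x
    using that fstL[OF that] by (cases x) auto
  show ?thesis
  proof (intro conjI impI)
    assume iD: "i \<in> D"
    show "AE x in p. clicks D x = {i}"
      using ae
    proof (rule eventually_mono)
      fix x assume "x \<in> Lam i z"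
      then have "fst x = i" by (rule fstL)
      then show "clicks D x = {i}" using iD unfolding clicks_def by auto
    qed
    have iB: "i \<notin> \<Union>B" using iD cf by auto
    show "apply_config F D S B \<omega> R p \<in> zdist (axis i 1) i"
    proof (rule apply_zdist[OF p])
      fix x assume "x \<in> Lam i z"
      then obtain u tau where x: "x = (i, u, tau)" and xl: "(i, u, tau) \<in> Lam i z" using split by blast
      show "AE y in gate_kernel F D S B \<omega> R x. y \<in> Lam i (axis i 1)"
        by (rule AE_kernel[OF pred_Lam]) (use set_pmf_move(2)[OF iB] post_in_Lam_D[OF cfg xl iD] x in auto)
    qed
  next
    assume iD: "i \<notin> D"
    show "AE x in p. clicks D x = {}"
      using ae
    proof (rule eventually_mono)
      fix x assume "x \<in> Lam i z"
      then have "fst x = i" by (rule fstL)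
      then show "clicks D x = {}" using iD unfolding clicks_def by auto
    qed
    show "let z' = normalise (mprod (\<lambda>j. mat 1 - P_mat j) D ** mprod (\<lambda>k. S_mat (\<omega> k) k) S
                                  ** mprod (\<lambda>b. B_mat (R b) b) B *v z);
                 p' = apply_config F D S B \<omega> R p
             in (i \<notin> \<Union>B \<longrightarrow> p' \<in> zdist z' i) \<and>
                (\<forall>s t. {s, t} \<in> B \<longrightarrow> i \<in> {s, t} \<longrightarrow>
                   (cmod (z' $ s))\<^sup>2 + (cmod (z' $ t))\<^sup>2 \<noteq> 0 \<longrightarrow>
                   (\<exists>ps pt. ps \<in> zdist z' s \<and> pt \<in> zdist z' t \<and>
                      (\<forall>A\<in>sets lam_M. measure p' A =
                          (cmod (z' $ s))\<^sup>2 / ((cmod (z' $ s))\<^sup>2 + (cmod (z' $ t))\<^sup>2) * measure ps A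
                        + (cmod (z' $ t))\<^sup>2 / ((cmod (z' $ s))\<^sup>2 + (cmod (z' $ t))\<^sup>2) * measure pt A)))"
      unfolding Let_def Mv
    proof (intro conjI impI allI)
      assume iB: "i \<notin> \<Union>B"
      show "apply_config F D S B \<omega> R p \<in> zdist (normalise (Mvec F D S B \<omega> R z)) i"
      proof (rule apply_zdist[OF p])
        fix x assume "x \<in> Lam i z"
        then obtain u tau where x: "x = (i, u, tau)" and xl: "(i, u, tau) \<in> Lam i z" using split by blast
        obtain \<alpha> where t1: "gate_tau F D S B (i, u, tau) $ i = tau_max tau / 2"
          using post_props[OF cfg xl iD, of \<omega> R] by blast
        show "AE y in gate_kernel F D S B \<omega> R x. y \<in> Lam i (normalise (Mvec F D S B \<omega> R z))"
          by (rule AE_kernel[OF pred_Lam]) (use set_pmf_move(2)[OF iB] post_in_Lam[OF cfg xl iD t1] x in auto)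
      qed
    next
      fix s t assume st: "{s, t} \<in> B" "i \<in> {s, t}"
        and nz: "(cmod (normalise (Mvec F D S B \<omega> R z) $ s))\<^sup>2 + (cmod (normalise (Mvec F D S B \<omega> R z) $ t))\<^sup>2 \<noteq> 0"
      show "\<exists>ps pt. ps \<in> zdist (normalise (Mvec F D S B \<omega> R z)) s \<and> pt \<in> zdist (normalise (Mvec F D S B \<omega> R z)) t \<and>
                      (\<forall>A\<in>sets lam_M. measure (apply_config F D S B \<omega> R p) A =
                          (cmod (normalise (Mvec F D S B \<omega> R z) $ s))\<^sup>2 / ((cmod (normalise (Mvec F D S B \<omega> R z) $ s))\<^sup>2 + (cmod (normalise (Mvec F D S B \<omega> R z) $ t))\<^sup>2) * measure ps A
                        + (cmod (normalise (Mvec F D S B \<omega> R z) $ t))\<^sup>2 / ((cmod (normalise (Mvec F D S B \<omega> R z) $ s))\<^sup>2 + (cmod (normalise (Mvec F D S B \<omega> R z) $ t))\<^sup>2) * measure pt A)"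
        by (rule mixture[OF cfg p iD st nz])
    qed
  qed
qed


end
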